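(* Let $\kappa$ be a regular uncountable cardinal and assume $\kappa^{<\kappa}=\kappa$. If $(L,<_L)$ is a linear order of cardinality $>\kappa$, then Player I has a winning strategy in the game $G_\kappa(L)$. Hence, under $\kappa^{<\kappa}=\kappa$, the game $G_\kappa(L)$ is determined for every linear order $L$.
   Context: For a partial order $(A,\le)$, $X\subseteq A$ is cofinal (coinitial) in $A$ if for every $a\in A$ there is $x\in X$ with $a\le x$ ($a\ge x$); $\mathrm{cf}\,A$ ($\mathrm{ci}\,A$) is the least cardinality of a cofinal (coinitial) subset. For $R\subseteq A$ and $a\in A$ put $R\downarrow a=\{x\in R: x\le a\}$ and $R\uparrow a=\{x\in R: a\le x\}$. $R$ is a $\kappa$-subset of $A$, written $R\le_\kappa A$, if for every $a\in A$, $\mathrm{cf}(R\downarrow a)<\kappa$ and $\mathrm{ci}(R\uparrow a)<\kappa$. The game $G_\kappa(A)$: Players I and II alternately choose subsets $x_\alpha$ (by I) and $y_\alpha$ (by II) of $A$ for $\alpha<\kappa$ (in the order $x_0,y_0,x_1,y_1,\dots$), each of size $<\kappa$, such that $x_\alpha\subseteq y_\alpha$ and $\bigcup_{\nu<\alpha}y_\nu\subseteq x_\alpha$. Player II wins the play iff $R=\bigcup_{\alpha<\kappa}x_\alpha=\bigcup_{\alpha<\kappa}y_\alpha$ satisfies $R\le_\kappa A$; otherwise Player I wins. The game is determined if one of the players has a winning strategy. *)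

theory Defs
  imports Main
begin

unbundle cardinal_syntax

text \<open>Cardinals are represented in the BNF-library style: a cardinal kappa is a
card order k (a well-order on Field k which is an initial ordinal).  The ordinals
alpha < kappa are the elements of Field k, ordered by k.\<close>

text \<open>kappa^(<kappa) = kappa: for every cardinal lambda < kappa (realised by a set
A of size lambda inside Field k), kappa^lambda = |Func A (Field k)| is at most kappa
(the inequality kappa \<le> kappa^(<kappa) is trivial).\<close>
definition kappa_less_kappa_eq :: "'k rel \<Rightarrow> bool" where
  "kappa_less_kappa_eq k \<longleftrightarrow>
     (\<forall>A. A \<subseteq> Field k \<and> |A| <o k \<longrightarrow> |Func A (Field k)| \<le>o k)"

definition cofinal_in :: "'a rel \<Rightarrow> 'a set \<Rightarrow> 'a set \<Rightarrow> bool" where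
  "cofinal_in r Y X \<longleftrightarrow> Y \<subseteq> X \<and> (\<forall>a\<in>X. \<exists>y\<in>Y. (a, y) \<in> r)"

definition coinitial_in :: "'a rel \<Rightarrow> 'a set \<Rightarrow> 'a set \<Rightarrow> bool" where
  "coinitial_in r Y X \<longleftrightarrow> Y \<subseteq> X \<and> (\<forall>a\<in>X. \<exists>y\<in>Y. (y, a) \<in> r)"

text \<open>cf X < kappa: the least cardinality of a cofinal subset is below kappa,
i.e. some cofinal subset has size < kappa.\<close>
definition cf_less :: "'a rel \<Rightarrow> 'k rel \<Rightarrow> 'a set \<Rightarrow> bool" where
  "cf_less r k X \<longleftrightarrow> (\<exists>Y. cofinal_in r Y X \<and> |Y| <o k)"

definition ci_less :: "'a rel \<Rightarrow> 'k rel \<Rightarrow> 'a set \<Rightarrow> bool" where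
  "ci_less r k X \<longleftrightarrow> (\<exists>Y. coinitial_in r Y X \<and> |Y| <o k)"

definition down_set :: "'a rel \<Rightarrow> 'a set \<Rightarrow> 'a \<Rightarrow> 'a set" where
  "down_set r R a = {x\<in>R. (x, a) \<in> r}"

definition up_set :: "'a rel \<Rightarrow> 'a set \<Rightarrow> 'a \<Rightarrow> 'a set" where
  "up_set r R a = {x\<in>R. (a, x) \<in> r}"

definition kappa_subset :: "'a set \<Rightarrow> 'a rel \<Rightarrow> 'k rel \<Rightarrow> 'a set \<Rightarrow> bool" where
  "kappa_subset A r k R \<longleftrightarrow> R \<subseteq> A \<and>
     (\<forall>a\<in>A. cf_less r k (down_set r R a) \<and> ci_less r k (up_set r R a))"

text \<open>The game G_kappa(A).  A play is a function p from Field k (the ordinals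
alpha < kappa) to pairs (x_alpha, y_alpha).  The history before alpha is p restricted
to the strict predecessors of alpha.\<close>
definition restr :: "'k rel \<Rightarrow> ('k \<Rightarrow> 'a set \<times> 'a set) \<Rightarrow> 'k \<Rightarrow> ('k \<Rightarrow> 'a set \<times> 'a set)" where
  "restr k p \<alpha> = (\<lambda>\<nu>. if \<nu> \<in> underS k \<alpha> then p \<nu> else ({}, {}))"

definition moveI_ok :: "'a set \<Rightarrow> 'k rel \<Rightarrow> ('k \<Rightarrow> 'a set \<times> 'a set) \<Rightarrow> 'k \<Rightarrow> bool" where
  "moveI_ok A k p \<alpha> \<longleftrightarrow> fst (p \<alpha>) \<subseteq> A \<and> |fst (p \<alpha>)| <o k \<and>
     (\<Union>\<nu>\<in>underS k \<alpha>. snd (p \<nu>)) \<subseteq> fst (p \<alpha>)"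

definition moveII_ok :: "'a set \<Rightarrow> 'k rel \<Rightarrow> ('k \<Rightarrow> 'a set \<times> 'a set) \<Rightarrow> 'k \<Rightarrow> bool" where
  "moveII_ok A k p \<alpha> \<longleftrightarrow> snd (p \<alpha>) \<subseteq> A \<and> |snd (p \<alpha>)| <o k \<and> fst (p \<alpha>) \<subseteq> snd (p \<alpha>)"

definition legal_play :: "'a set \<Rightarrow> 'k rel \<Rightarrow> ('k \<Rightarrow> 'a set \<times> 'a set) \<Rightarrow> bool" where
  "legal_play A k p \<longleftrightarrow> (\<forall>\<alpha>\<in>Field k. moveI_ok A k p \<alpha> \<and> moveII_ok A k p \<alpha>)"

definition play_result :: "'k rel \<Rightarrow> ('k \<Rightarrow> 'a set \<times> 'a set) \<Rightarrow> 'a set" where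
  "play_result k p = (\<Union>\<alpha>\<in>Field k. snd (p \<alpha>))"

text \<open>Strategy of Player I: given alpha and the history before alpha, choose x_alpha.\<close>
definition winning_I :: "'a set \<Rightarrow> 'a rel \<Rightarrow> 'k rel \<Rightarrow>
    ('k \<Rightarrow> ('k \<Rightarrow> 'a set \<times> 'a set) \<Rightarrow> 'a set) \<Rightarrow> bool" where
  "winning_I A r k \<sigma> \<longleftrightarrow>
     (\<forall>p. \<forall>\<alpha>\<in>Field k.
        (\<forall>\<beta>\<in>underS k \<alpha>. moveI_ok A k p \<beta> \<and> moveII_ok A k p \<beta>) \<and>
        (\<forall>\<beta>\<in>under k \<alpha>. fst (p \<beta>) = \<sigma> \<beta> (restr k p \<beta>))
        \<longrightarrow> moveI_ok A k p \<alpha>) \<and>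
     (\<forall>p. legal_play A k p \<and> (\<forall>\<beta>\<in>Field k. fst (p \<beta>) = \<sigma> \<beta> (restr k p \<beta>))
        \<longrightarrow> \<not> kappa_subset A r k (play_result k p))"

text \<open>Strategy of Player II: given alpha, the history before alpha and I's current
move x_alpha, choose y_alpha.\<close>
definition winning_II :: "'a set \<Rightarrow> 'a rel \<Rightarrow> 'k rel \<Rightarrow>
    ('k \<Rightarrow> ('k \<Rightarrow> 'a set \<times> 'a set) \<Rightarrow> 'a set \<Rightarrow> 'a set) \<Rightarrow> bool" where
  "winning_II A r k \<tau> \<longleftrightarrow>
     (\<forall>p. \<forall>\<alpha>\<in>Field k.
        (\<forall>\<beta>\<in>underS k \<alpha>. moveI_ok A k p \<beta> \<and> moveII_ok A k p \<beta>) \<and> moveI_ok A k p \<alpha> \<and>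
        (\<forall>\<beta>\<in>under k \<alpha>. snd (p \<beta>) = \<tau> \<beta> (restr k p \<beta>) (fst (p \<beta>)))
        \<longrightarrow> moveII_ok A k p \<alpha>) \<and>
     (\<forall>p. legal_play A k p \<and> (\<forall>\<beta>\<in>Field k. snd (p \<beta>) = \<tau> \<beta> (restr k p \<beta>) (fst (p \<beta>)))
        \<longrightarrow> kappa_subset A r k (play_result k p))"

definition I_wins :: "'a set \<Rightarrow> 'a rel \<Rightarrow> 'k rel \<Rightarrow> bool" where
  "I_wins A r k \<longleftrightarrow> (\<exists>\<sigma>. winning_I A r k \<sigma>)"

definition II_wins :: "'a set \<Rightarrow> 'a rel \<Rightarrow> 'k rel \<Rightarrow> bool" where
  "II_wins A r k \<longleftrightarrow> (\<exists>\<tau>. winning_II A r k \<tau>)"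

definition determined :: "'a set \<Rightarrow> 'a rel \<Rightarrow> 'k rel \<Rightarrow> bool" where
  "determined A r k \<longleftrightarrow> I_wins A r k \<or> II_wins A r k"

end

theory Submission imports Defs begin

lemma inf_field: assumes "Card_order k" "(natLeq, k) \<in> ordLess" shows "\<not> finite (Field k)"
proof -
  have "natLeq \<le>o |Field k|"
    using ordLeq_ordIso_trans[OF ordLess_imp_ordLeq[OF assms(2)] ordIso_symmetric[OF card_of_Field_ordIso[OF assms(1)]]] .
  then show ?thesis using infinite_iff_natLeq_ordLeq by blast
qed

lemma finite_less: assumes "Card_order k" "\<not> finite (Field k)" "finite A" shows "|A| <o k"
  by (metis Field_card_of assms card_of_Well_order
    card_order_on_well_order_on finite_ordLess_infinite)

lemma wo_facts:
  assumes "Card_order k"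
  shows "trans k" "antisym k" "\<And>a. a \<in> Field k \<Longrightarrow> (a,a) \<in> k"
    "\<And>a b. a \<in> Field k \<Longrightarrow> b \<in> Field k \<Longrightarrow> (a,b) \<in> k \<or> (b,a) \<in> k"
proof -
  have W: "Well_order k" using assms card_order_on_well_order_on by blast
  then show "trans k" "antisym k"
    unfolding well_order_on_def linear_order_on_def partial_order_on_def preorder_on_def by auto
  show "\<And>a. a \<in> Field k \<Longrightarrow> (a,a) \<in> k" using W
    unfolding well_order_on_def linear_order_on_def partial_order_on_def preorder_on_def refl_on_def by auto
  have T: "total_on (Field k) k" "refl_on (Field k) k" using W
    unfolding well_order_on_def linear_order_on_def partial_order_on_def preorder_on_def by auto
  show "\<And>a b. a \<in> Field k \<Longrightarrow> b \<in> Field k \<Longrightarrow> (a,b) \<in> k \<or> (b,a) \<in> k"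
  proof -
    fix a b assume "a \<in> Field k" "b \<in> Field k"
    then show "(a,b) \<in> k \<or> (b,a) \<in> k" using T unfolding total_on_def refl_on_def by (cases "a = b") auto
  qed
qed

lemma underS_trans:
  assumes "Card_order k" "\<nu> \<in> underS k \<gamma>" "\<gamma> \<in> underS k \<alpha>"
  shows "\<nu> \<in> underS k \<alpha>"
proof -
  have "(\<nu>,\<gamma>) \<in> k" "\<nu> \<noteq> \<gamma>" "(\<gamma>,\<alpha>) \<in> k" "\<gamma> \<noteq> \<alpha>" using assms unfolding underS_def by auto
  moreover have "trans k" "antisym k" using wo_facts assms(1) by auto
  ultimately have "(\<nu>,\<alpha>) \<in> k" by (meson transD)
  moreover have "\<nu> \<noteq> \<alpha>" using \<open>(\<nu>,\<gamma>) \<in> k\<close> \<open>(\<gamma>,\<alpha>) \<in> k\<close> \<open>antisym k\<close> \<open>\<gamma> \<noteq> \<alpha>\<close>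
    by (metis antisymD)
  ultimately show ?thesis unfolding underS_def by blast
qed

lemma bound:
  assumes "Card_order k" "regularCard k" "\<not> finite (Field k)" "B \<subseteq> Field k" "|B| <o k"
  shows "\<exists>\<gamma>\<in>Field k. B \<subseteq> underS k \<gamma>"
proof -
  have "\<not> cofinal B k"
  proof
    assume "cofinal B k"
    then have "|B| =o k" using assms(2,4) unfolding regularCard_def by blast
    then show False using assms(5) not_ordLess_ordIso by blast
  qed
  then obtain a where a: "a \<in> Field k" "\<forall>b\<in>B. a = b \<or> (a,b) \<notin> k" unfolding cofinal_def by blast
  obtain a' where a': "a' \<in> Field k" "a \<noteq> a'" "(a,a') \<in> k"
    using infinite_Card_order_limit[OF assms(1,3) a(1)] by blast
  have "B \<subseteq> underS k a'"
  proof
    fix b assume b: "b \<in> B"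
    have bF: "b \<in> Field k" using b assms(4) by blast
    have "(b,a) \<in> k"
    proof (cases "a = b")
      case True then show ?thesis using wo_facts(3)[OF assms(1) a(1)] by simp
    next
      case False then have "(a,b) \<notin> k" using a(2) b by blast
      then show ?thesis using wo_facts(4)[OF assms(1) a(1) bF] by blast
    qed
    moreover have "trans k" "antisym k" using wo_facts assms(1) by auto
    ultimately have "(b,a') \<in> k" using a'(3) by (meson transD)
    moreover have "b \<noteq> a'" using \<open>(b,a) \<in> k\<close> a' \<open>antisym k\<close> by (metis antisymD)
    ultimately show "b \<in> underS k a'" unfolding underS_def by blast
  qed
  then show ?thesis using a' by blast
qed


lemma pow_le:
  assumes "Card_order k" "\<not> finite (Field k)" "kappa_less_kappa_eq k" "|Y| <o k"
  shows "|Pow Y| \<le>o |Field k|"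
proof -
  have FI: "|Field k| =o k" using card_of_Field_ordIso[OF assms(1)] .
  have "|Y| \<le>o |Field k|"
    using ordLeq_ordIso_trans[OF ordLess_imp_ordLeq[OF assms(4)] ordIso_symmetric[OF FI]] .
  then have "\<exists>f. inj_on f Y \<and> f ` Y \<subseteq> Field k" using card_of_ordLeq[of Y "Field k"] by simp
  then obtain f where f: "inj_on f Y" "f ` Y \<subseteq> Field k" by blast
  define A where "A = f ` Y"
  have "|A| <o k" unfolding A_def using ordLeq_ordLess_trans[OF card_of_image assms(4)] .
  moreover have "A \<subseteq> Field k" using f A_def by simp
  ultimately have FA: "|Func A (Field k)| \<le>o k" using assms(3) unfolding kappa_less_kappa_eq_def by simp
  have "Field k \<noteq> {}" using assms(2) by auto
  then obtain b0 where b0: "b0 \<in> Field k" by blast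
  have "\<not> Field k \<subseteq> {b0}" using assms(2) finite_subset by blast
  then obtain b1 where b1: "b1 \<in> Field k" "b1 \<noteq> b0" by blast
  have b: "b0 \<in> Field k" "b1 \<in> Field k" "b0 \<noteq> b1" using b0 b1 by auto
  define F where "F S = (\<lambda>x. if x \<in> A then (if x \<in> f ` S then b1 else b0) else undefined)" for S
  have "inj_on F (Pow Y)"
  proof (rule inj_onI)
    fix S S' assume S: "S \<in> Pow Y" "S' \<in> Pow Y" "F S = F S'"
    show "S = S'"
    proof (rule set_eqI)
      fix y
      show "y \<in> S \<longleftrightarrow> y \<in> S'"
      proof (cases "y \<in> Y")
        case True
        have "F S (f y) = F S' (f y)" using S by simp
        moreover have fyA: "f y \<in> A" using True A_def by blast
        ultimately have "(if f y \<in> f ` S then b1 else b0) = (if f y \<in> f ` S' then b1 else b0)"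
          unfolding F_def by simp
        then have "f y \<in> f ` S \<longleftrightarrow> f y \<in> f ` S'" using b(3) by (auto split: if_splits)
        moreover have "f y \<in> f ` S \<longleftrightarrow> y \<in> S" using f(1) S True by (meson PowD inj_on_image_mem_iff)
        moreover have "f y \<in> f ` S' \<longleftrightarrow> y \<in> S'" using f(1) S True by (meson PowD inj_on_image_mem_iff)
        ultimately show ?thesis by simp
      next
        case False
        then show ?thesis using S by auto
      qed
    qed
  qed
  moreover have "F ` Pow Y \<subseteq> Func A (Field k)" using b unfolding F_def Func_def by auto
  ultimately have "|Pow Y| \<le>o |Func A (Field k)|" using card_of_ordLeq by blast
  then show ?thesis using ordLeq_ordIso_trans[OF ordLeq_transitive[OF _ FA] ordIso_symmetric[OF FI]] by blast
qed


definition Yh :: "'k rel \<Rightarrow> ('k \<Rightarrow> 'a set \<times> 'a set) \<Rightarrow> 'k \<Rightarrow> 'a set" where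
  "Yh k h \<gamma> = (\<Union>\<nu>\<in>underS k \<gamma>. snd (h \<nu>))"

definition Oint :: "'a set \<Rightarrow> 'a rel \<Rightarrow> 'a set \<Rightarrow> 'a set \<Rightarrow> 'a set" where
  "Oint L r D U = {x\<in>L. (\<forall>d\<in>D. (d,x) \<in> r \<and> d \<noteq> x) \<and> (\<forall>u\<in>U. (x,u) \<in> r \<and> x \<noteq> u)}"

definition Pt :: "'a set \<Rightarrow> 'a rel \<Rightarrow> 'a set \<Rightarrow> 'a set \<Rightarrow> 'a set" where
  "Pt L r D Y = (if Oint L r D (Y - D) \<noteq> {} then {SOME x. x \<in> Oint L r D (Y - D)} else {})"

definition En :: "'k rel \<Rightarrow> 'a set \<Rightarrow> 'k \<Rightarrow> 'a set" where
  "En k Y = (SOME e. Pow Y \<subseteq> e ` Field k)"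

definition sig :: "'a set \<Rightarrow> 'a rel \<Rightarrow> 'k rel \<Rightarrow> 'k \<Rightarrow> ('k \<Rightarrow> 'a set \<times> 'a set) \<Rightarrow> 'a set" where
  "sig L r k \<alpha> h = Yh k h \<alpha> \<union>
     (\<Union>\<gamma>\<in>underS k \<alpha>. \<Union>i\<in>underS k \<alpha>. Pt L r (En k (Yh k h \<gamma>) i) (Yh k h \<gamma>))"

lemma Pt_sub: "Pt L r D Y \<subseteq> Oint L r D (Y - D)"
proof (cases "Oint L r D (Y - D) = {}")
  case True then show ?thesis unfolding Pt_def by simp
next
  case False
  then have "\<exists>x. x \<in> Oint L r D (Y - D)" by blast
  then have "(SOME x. x \<in> Oint L r D (Y - D)) \<in> Oint L r D (Y - D)" by (rule someI_ex)
  then show ?thesis using False unfolding Pt_def by simp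
qed

lemma Pt_fin: "finite (Pt L r D Y)"
  unfolding Pt_def by auto

lemma Pt_in: "x \<in> Oint L r D (Y - D) \<Longrightarrow> \<exists>c. c \<in> Pt L r D Y"
  unfolding Pt_def by auto

lemma En_surj:
  assumes "Card_order k" "\<not> finite (Field k)" "kappa_less_kappa_eq k" "|Y| <o k"
  shows "Pow Y \<subseteq> En k Y ` Field k"
proof -
  have "Pow Y \<noteq> {}" by blast
  then have "\<exists>g. g ` Field k = Pow Y" using iffD2[OF card_of_ordLeq2 pow_le[OF assms]] by blast
  then obtain g where "g ` Field k = Pow Y" by blast
  then have "\<exists>e. Pow Y \<subseteq> e ` Field k" by (intro exI[of _ g]) simp
  then show ?thesis unfolding En_def by (rule someI_ex)
qed

lemma sig_ok:
  assumes "Card_order k" "regularCard k" "\<not> finite (Field k)" "\<alpha> \<in> Field k"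
    and "\<And>\<nu>. \<nu> \<in> underS k \<alpha> \<Longrightarrow> snd (h \<nu>) \<subseteq> L \<and> |snd (h \<nu>)| <o k"
  shows "sig L r k \<alpha> h \<subseteq> L" "|sig L r k \<alpha> h| <o k"
proof -
  have st: "stable k" using regularCard_stable[OF assms(1,3,2)] .
  have U: "|underS k \<alpha>| <o k" using card_of_underS[OF assms(1,4)] .
  have Y0: "\<And>\<nu>. \<nu> \<in> underS k \<alpha> \<Longrightarrow> snd (h \<nu>) \<subseteq> L" using assms(5) by simp
  have Y1: "Yh k h \<alpha> \<subseteq> L" unfolding Yh_def by (rule UN_least) (rule Y0)
  have Y2: "|Yh k h \<alpha>| <o k" unfolding Yh_def
    by (rule stable_UNION[OF st U]) (simp add: assms(5))
  let ?P = "\<Union>\<gamma>\<in>underS k \<alpha>. \<Union>i\<in>underS k \<alpha>. Pt L r (En k (Yh k h \<gamma>) i) (Yh k h \<gamma>)"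
  have OL: "\<And>D Y. Pt L r D Y \<subseteq> L" using Pt_sub unfolding Oint_def by fastforce
  have P1: "?P \<subseteq> L" by (intro UN_least) (rule OL)
  have P0: "\<And>\<gamma>. |\<Union>i\<in>underS k \<alpha>. Pt L r (En k (Yh k h \<gamma>) i) (Yh k h \<gamma>)| <o k"
    by (rule stable_UNION[OF st U]) (rule finite_less[OF assms(1,3) Pt_fin])
  have P2: "|?P| <o k" by (rule stable_UNION[OF st U]) (rule P0)
  show "sig L r k \<alpha> h \<subseteq> L" unfolding sig_def using Y1 P1 by (rule Un_least)
  show "|sig L r k \<alpha> h| <o k" unfolding sig_def using card_of_Un_ordLess_infinite_Field[OF assms(3,1) Y2 P2] .
qed


lemma restr_eq: "\<nu> \<in> underS k \<alpha> \<Longrightarrow> restr k p \<alpha> \<nu> = p \<nu>"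
  unfolding restr_def by simp

lemma Yh_restr:
  assumes "Card_order k" "\<gamma> \<in> underS k \<alpha>"
  shows "Yh k (restr k p \<alpha>) \<gamma> = Yh k p \<gamma>"
  unfolding Yh_def using restr_eq underS_trans[OF assms(1) _ assms(2)] by (metis (no_types, lifting) SUP_cong)

lemma Yh_restr_self: "Yh k (restr k p \<alpha>) \<alpha> = Yh k p \<alpha>"
  unfolding Yh_def using restr_eq by (metis (no_types, lifting) SUP_cong)

lemma partI_moves:
  assumes "Card_order k" "regularCard k" "\<not> finite (Field k)" "\<alpha> \<in> Field k"
    and H1: "\<forall>\<beta>\<in>underS k \<alpha>. moveI_ok L k p \<beta> \<and> moveII_ok L k p \<beta>"
    and H2: "fst (p \<alpha>) = sig L r k \<alpha> (restr k p \<alpha>)"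
  shows "moveI_ok L k p \<alpha>"
proof -
  have h: "\<And>\<nu>. \<nu> \<in> underS k \<alpha> \<Longrightarrow> snd (restr k p \<alpha> \<nu>) \<subseteq> L \<and> |snd (restr k p \<alpha> \<nu>)| <o k"
  proof -
    fix \<nu> assume n: "\<nu> \<in> underS k \<alpha>"
    then have "moveII_ok L k p \<nu>" using H1 by blast
    then show "snd (restr k p \<alpha> \<nu>) \<subseteq> L \<and> |snd (restr k p \<alpha> \<nu>)| <o k"
      unfolding moveII_ok_def restr_eq[OF n] by simp
  qed
  have a: "fst (p \<alpha>) \<subseteq> L" using H2 sig_ok(1)[OF assms(1-4) h] by simp
  have b: "|fst (p \<alpha>)| <o k" using H2 sig_ok(2)[OF assms(1-4) h] by simp
  have "(\<Union>\<nu>\<in>underS k \<alpha>. snd (p \<nu>)) = Yh k (restr k p \<alpha>) \<alpha>"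
    unfolding Yh_restr_self by (simp add: Yh_def)
  then have c: "(\<Union>\<nu>\<in>underS k \<alpha>. snd (p \<nu>)) \<subseteq> fst (p \<alpha>)" unfolding H2 sig_def by blast
  show ?thesis unfolding moveI_ok_def using a b c by blast
qed


lemma partI_win:
  assumes co: "Card_order k" and reg: "regularCard k" and inf: "\<not> finite (Field k)"
    and kle: "kappa_less_kappa_eq k" and lin: "linear_order_on L r" and big: "k <o |L|"
    and legal: "legal_play L k p"
    and fol: "\<forall>\<beta>\<in>Field k. fst (p \<beta>) = sig L r k \<beta> (restr k p \<beta>)"
  shows "\<not> kappa_subset L r k (play_result k p)"
proof
  define R where "R = play_result k p"
  assume ks: "kappa_subset L r k (play_result k p)"
  have ant: "antisym r" and tot: "total_on L r"
    using lin unfolding linear_order_on_def partial_order_on_def by auto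
  have PL: "\<And>\<alpha>. \<alpha> \<in> Field k \<Longrightarrow> snd (p \<alpha>) \<subseteq> L"
    using legal unfolding legal_play_def moveII_ok_def by blast
  have PS: "\<And>\<alpha>. \<alpha> \<in> Field k \<Longrightarrow> |snd (p \<alpha>)| <o k"
    using legal unfolding legal_play_def moveII_ok_def by blast
  have PF: "\<And>\<alpha>. \<alpha> \<in> Field k \<Longrightarrow> fst (p \<alpha>) \<subseteq> snd (p \<alpha>)"
    using legal unfolding legal_play_def moveII_ok_def by blast
  have st: "stable k" using regularCard_stable[OF co inf reg] .
  have "L \<subseteq> R"
  proof
    fix a assume aL: "a \<in> L"
    show "a \<in> R"
    proof (rule ccontr)
      assume aR: "a \<notin> R"
      have "cf_less r k (down_set r R a)" "ci_less r k (up_set r R a)"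
        using ks aL unfolding kappa_subset_def R_def by auto
      then obtain s t where s: "cofinal_in r s (down_set r R a)" "|s| <o k"
        and t: "coinitial_in r t (up_set r R a)" "|t| <o k"
        unfolding cf_less_def ci_less_def by blast
      have sR: "s \<subseteq> down_set r R a" using s(1) unfolding cofinal_in_def by blast
      have tR: "t \<subseteq> up_set r R a" using t(1) unfolding coinitial_in_def by blast
      have stR: "s \<union> t \<subseteq> R" using sR tR unfolding down_set_def up_set_def by blast
      define bf where "bf x = (SOME \<beta>. \<beta> \<in> Field k \<and> x \<in> snd (p \<beta>))" for x
      have bf: "bf x \<in> Field k \<and> x \<in> snd (p (bf x))" if "x \<in> s \<union> t" for x
      proof -
        have "\<exists>\<beta>. \<beta> \<in> Field k \<and> x \<in> snd (p \<beta>)" using stR that unfolding R_def play_result_def by blast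
        then show ?thesis unfolding bf_def by (rule someI_ex)
      qed
      have B2: "|bf ` (s \<union> t)| <o k"
        using ordLeq_ordLess_trans[OF card_of_image card_of_Un_ordLess_infinite_Field[OF inf co s(2) t(2)]] .
      have B1: "bf ` (s \<union> t) \<subseteq> Field k" using bf by blast
      obtain \<gamma> where g: "\<gamma> \<in> Field k" "bf ` (s \<union> t) \<subseteq> underS k \<gamma>"
        using bound[OF co reg inf B1 B2] by blast
      define Y where "Y = Yh k p \<gamma>"
      have sY: "s \<union> t \<subseteq> Y"
      proof
        fix x assume x: "x \<in> s \<union> t"
        then have "bf x \<in> underS k \<gamma>" using g by blast
        then show "x \<in> Y" using bf[OF x] unfolding Y_def Yh_def by blast
      qed
      have UF: "underS k \<gamma> \<subseteq> Field k" by (rule Order_Relation.underS_Field)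
      have YL: "Y \<subseteq> L" unfolding Y_def Yh_def using PL UF by blast
      have YS: "|Y| <o k" unfolding Y_def Yh_def
        by (rule stable_UNION[OF st card_of_underS[OF co g(1)]]) (rule PS, rule subsetD[OF UF], assumption)
      have YR: "Y \<subseteq> R" unfolding Y_def Yh_def R_def play_result_def using UF by blast
      define D where "D = {x\<in>Y. (x,a) \<in> r}"
      have "D \<in> Pow Y" unfolding D_def by blast
      then have "D \<in> En k Y ` Field k" using En_surj[OF co inf kle YS] by (rule subsetD[rotated])
      then obtain i where i: "i \<in> Field k" "D = En k Y i" by blast
      have "|{\<gamma>, i}| <o k" by (rule finite_less[OF co inf]) simp
      moreover have "{\<gamma>, i} \<subseteq> Field k" using g(1) i(1) by simp
      ultimately obtain \<alpha> where al: "\<alpha> \<in> Field k" "{\<gamma>, i} \<subseteq> underS k \<alpha>"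
        using bound[OF co reg inf] by blast
      have "\<gamma> \<in> underS k \<alpha>" using al(2) by simp
      then have "Yh k (restr k p \<alpha>) \<gamma> = Y" unfolding Y_def by (rule Yh_restr[OF co])
      then have "Pt L r D Y \<subseteq> sig L r k \<alpha> (restr k p \<alpha>)"
        unfolding sig_def i(2) using al(2) by blast
      then have PtR: "Pt L r D Y \<subseteq> R" using fol al(1) PF[OF al(1)] unfolding R_def play_result_def by blast
      have aO: "a \<in> Oint L r D (Y - D)"
        unfolding Oint_def
      proof (intro CollectI conjI ballI aL)
        fix d assume "d \<in> D"
        then show "(d,a) \<in> r" "d \<noteq> a" using aR YR unfolding D_def by auto
      next
        fix u assume u: "u \<in> Y - D"
        then have "u \<in> L" "(u,a) \<notin> r" "u \<noteq> a" using YL aR YR unfolding D_def by auto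
        then show "(a,u) \<in> r" "a \<noteq> u" using tot aL unfolding total_on_def by auto
      qed
      obtain c where c: "c \<in> Pt L r D Y" using Pt_in[OF aO] by blast
      have cO: "c \<in> Oint L r D (Y - D)" using subsetD[OF Pt_sub c] .
      have cR: "c \<in> R" using c PtR by blast
      have cL: "c \<in> L" using cO unfolding Oint_def by blast
      have "c \<noteq> a" using cR aR by blast
      then have "(c,a) \<in> r \<or> (a,c) \<in> r" using tot aL cL unfolding total_on_def by blast
      then show False
      proof
        assume "(c,a) \<in> r"
        then have "c \<in> down_set r R a" using cR unfolding down_set_def by blast
        then obtain y where y: "y \<in> s" "(c,y) \<in> r" using s(1) unfolding cofinal_in_def by blast
        have "(y,a) \<in> r" using y(1) sR unfolding down_set_def by blast
        moreover have "y \<in> Y" using y(1) sY by blast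
        ultimately have "y \<in> D" unfolding D_def by blast
        then have "(y,c) \<in> r" "y \<noteq> c" using cO unfolding Oint_def by blast+
        then show False using y(2) ant by (metis antisymD)
      next
        assume "(a,c) \<in> r"
        then have "c \<in> up_set r R a" using cR unfolding up_set_def by blast
        then obtain y where y: "y \<in> t" "(y,c) \<in> r" using t(1) unfolding coinitial_in_def by blast
        have ay: "(a,y) \<in> r" "y \<in> R" using y(1) tR unfolding up_set_def by blast+
        have "y \<in> Y" using y(1) sY by blast
        moreover have "y \<notin> D"
        proof
          assume "y \<in> D"
          then have "(y,a) \<in> r" unfolding D_def by blast
          then have "y = a" using ay(1) ant by (metis antisymD)
          then show False using ay(2) aR by blast
        qed
        ultimately have "y \<in> Y - D" by blast
        then have "(c,y) \<in> r" "c \<noteq> y" using cO unfolding Oint_def by blast+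
        then show False using y(2) ant by (metis antisymD)
      qed
    qed
  qed
  then have "|L| \<le>o |R|" by (rule card_of_mono1)
  moreover have "|R| \<le>o k" unfolding R_def play_result_def
    by (rule card_of_UNION_ordLeq_infinite_Field[OF inf co ordIso_imp_ordLeq[OF card_of_Field_ordIso[OF co]]])
       (intro ballI ordLess_imp_ordLeq PS)
  ultimately have "|L| \<le>o k" by (rule ordLeq_transitive)
  then show False using not_ordLess_ordLeq[OF big] by blast
qed


lemma self_under: assumes "Card_order k" "\<alpha> \<in> Field k" shows "\<alpha> \<in> under k \<alpha>"
proof -
  have "(\<alpha>,\<alpha>) \<in> k" by (rule wo_facts(3)[OF assms])
  then show ?thesis unfolding under_def by simp
qed

lemma partII:
  fixes k :: "'k rel" and L :: "'a set"
  assumes co: "Card_order k" and inf: "\<not> finite (Field k)" and lin: "linear_order_on L r"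
    and le: "|L| \<le>o k"
  shows "II_wins L r k"
proof -
  have rfl: "\<And>a. a \<in> L \<Longrightarrow> (a,a) \<in> r"
    using lin unfolding linear_order_on_def partial_order_on_def preorder_on_def refl_on_def by blast
  obtain g where gL: "L \<subseteq> g ` Field k"
  proof (cases "L = {}")
    case True then show ?thesis using that by blast
  next
    case False
    have "|L| \<le>o |Field k|" using ordLeq_ordIso_trans[OF le ordIso_symmetric[OF card_of_Field_ordIso[OF co]]] .
    then have "\<exists>g. g ` Field k = L" by (rule iffD2[OF card_of_ordLeq2[OF False]])
    then show ?thesis using that by blast
  qed
  define \<tau> where "\<tau> = (\<lambda>(\<beta>::'k) (h::'k \<Rightarrow> 'a set \<times> 'a set) x. x \<union> ({g \<beta>} \<inter> L))"
  have W1: "moveII_ok L k p \<alpha>"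
    if a: "\<alpha> \<in> Field k" and m: "moveI_ok L k p \<alpha>"
      and f: "\<forall>\<beta>\<in>under k \<alpha>. snd (p \<beta>) = \<tau> \<beta> (restr k p \<beta>) (fst (p \<beta>))" for p \<alpha>
  proof -
    have e: "snd (p \<alpha>) = fst (p \<alpha>) \<union> ({g \<alpha>} \<inter> L)" using f self_under[OF co a] unfolding \<tau>_def by simp
    have m1: "fst (p \<alpha>) \<subseteq> L" and m2: "|fst (p \<alpha>)| <o k" using m unfolding moveI_ok_def by simp_all
    have "|{g \<alpha>} \<inter> L| <o k" by (rule finite_less[OF co inf]) simp
    then have "|fst (p \<alpha>) \<union> ({g \<alpha>} \<inter> L)| <o k" by (rule card_of_Un_ordLess_infinite_Field[OF inf co m2])
    moreover have "fst (p \<alpha>) \<union> ({g \<alpha>} \<inter> L) \<subseteq> L" using m1 by blast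
    ultimately show ?thesis unfolding moveII_ok_def e by simp
  qed
  have W2: "kappa_subset L r k (play_result k p)"
    if l: "legal_play L k p" and f: "\<forall>\<beta>\<in>Field k. snd (p \<beta>) = \<tau> \<beta> (restr k p \<beta>) (fst (p \<beta>))" for p
  proof -
    define R where "R = play_result k p"
    have RL: "R \<subseteq> L" using l unfolding R_def play_result_def legal_play_def moveII_ok_def by blast
    have LR: "L \<subseteq> R"
    proof
      fix a assume aL: "a \<in> L"
      then obtain \<beta> where b: "\<beta> \<in> Field k" "a = g \<beta>" using gL by blast
      then have "a \<in> snd (p \<beta>)" using f aL unfolding \<tau>_def by simp
      then show "a \<in> R" using b unfolding R_def play_result_def by blast
    qed
    have one: "|{a}| <o k" for a :: 'a by (rule finite_less[OF co inf]) simp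
    have "cf_less r k (down_set r R a) \<and> ci_less r k (up_set r R a)" if aL: "a \<in> L" for a
    proof
      have "cofinal_in r {a} (down_set r R a)" unfolding cofinal_in_def down_set_def using aL LR rfl by blast
      then show "cf_less r k (down_set r R a)" unfolding cf_less_def using one[of a] by (intro exI[of _ "{a}"] conjI)
      have "coinitial_in r {a} (up_set r R a)" unfolding coinitial_in_def up_set_def using aL LR rfl by blast
      then show "ci_less r k (up_set r R a)" unfolding ci_less_def using one[of a] by (intro exI[of _ "{a}"] conjI)
    qed
    then show ?thesis unfolding kappa_subset_def R_def[symmetric] using RL by (intro conjI ballI) auto
  qed
  have "winning_II L r k \<tau>" unfolding winning_II_def
  proof (intro conjI allI impI ballI)
    fix p \<alpha> assume "\<alpha> \<in> Field k" and h: "(\<forall>\<beta>\<in>underS k \<alpha>. moveI_ok L k p \<beta> \<and> moveII_ok L k p \<beta>) \<and> moveI_ok L k p \<alpha> \<and>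
        (\<forall>\<beta>\<in>under k \<alpha>. snd (p \<beta>) = \<tau> \<beta> (restr k p \<beta>) (fst (p \<beta>)))"
    show "moveII_ok L k p \<alpha>" by (rule W1[OF \<open>\<alpha> \<in> Field k\<close>]) (use h in simp_all)
  next
    fix p assume h: "legal_play L k p \<and> (\<forall>\<beta>\<in>Field k. snd (p \<beta>) = \<tau> \<beta> (restr k p \<beta>) (fst (p \<beta>)))"
    show "kappa_subset L r k (play_result k p)" by (rule W2) (use h in simp_all)
  qed
  then show ?thesis unfolding II_wins_def by blast
qed

theorem proposition2:
  fixes k :: "'k rel"
  assumes "Card_order k" and "regularCard k" and "(natLeq, k) \<in> ordLess"
    and "kappa_less_kappa_eq k"
  shows "(\<forall>(L :: 'a set) r. linear_order_on L r \<and> (k, card_of L) \<in> ordLess \<longrightarrow> I_wins L r k) \<and>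
         (\<forall>(L :: 'a set) r. linear_order_on L r \<longrightarrow> determined L r k)"
proof -
  have co: "Card_order k" and reg: "regularCard k" and kle: "kappa_less_kappa_eq k" using assms by auto
  have inf: "\<not> finite (Field k)" using inf_field[OF assms(1,3)] .
  have P1: "I_wins L r k" if lin: "linear_order_on L r" and big: "k <o |L|" for L :: "'a set" and r
  proof -
    have "winning_I L r k (sig L r k)" unfolding winning_I_def
    proof (intro conjI allI impI ballI)
      fix p \<alpha> assume a: "\<alpha> \<in> Field k"
        and h: "(\<forall>\<beta>\<in>underS k \<alpha>. moveI_ok L k p \<beta> \<and> moveII_ok L k p \<beta>) \<and>
               (\<forall>\<beta>\<in>under k \<alpha>. fst (p \<beta>) = sig L r k \<beta> (restr k p \<beta>))"
      have h2: "fst (p \<alpha>) = sig L r k \<alpha> (restr k p \<alpha>)" using h self_under[OF co a] by blast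
      show "moveI_ok L k p \<alpha>" using partI_moves[OF co reg inf a _ h2] h by blast
    next
      fix p assume h: "legal_play L k p \<and> (\<forall>\<beta>\<in>Field k. fst (p \<beta>) = sig L r k \<beta> (restr k p \<beta>))"
      then show "\<not> kappa_subset L r k (play_result k p)"
        using partI_win[OF co reg inf kle lin big] by blast
    qed
    then show ?thesis unfolding I_wins_def by blast
  qed
  have P2: "determined L r k" if lin: "linear_order_on L r" for L :: "'a set" and r
  proof -
    have "k <o |L| \<or> |L| \<le>o k"
      using ordLess_or_ordLeq[OF card_order_on_well_order_on[OF co] card_of_Well_order] .
    then show ?thesis
    proof
      assume "k <o |L|" then show ?thesis unfolding determined_def using P1[OF lin] by blast
    next
      assume "|L| \<le>o k" then show ?thesis unfolding determined_def using partII[OF co inf lin] by blast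
    qed
  qed
  show ?thesis using P1 P2 by blast
qed

end
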